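(* Let $t, b \ge 1$ be integers and $T$ a finite non-empty subset of $\mathbb{Z}^b$. Let $S$ be a set and let $\mathcal{F}$ be a family consisting of at least $(t-1)|T|^2$ pairwise disjoint subsets of $S$. Then there is a set $X \subset \mathbb{Z}^b \times S$ satisfying: (1) $X$ is a union of pairwise disjoint sets of the form $(T+x)\times A$ with $x \in \mathbb{Z}^b$ and $A \in \mathcal{F}$; and (2) for each $x \in \mathbb{Z}^b$ there is some $m \equiv 1 \pmod t$ such that $\{y \in S : (x,y) \in X\}$ is a union of $m$ distinct members of $\mathcal{F}$. *)

theory Defs
  imports "HOL-Analysis.Analysis" "HOL-Number_Theory.Cong"
begin

end

theory Submission
  imports Defs "HOL-Library.Nat_Bijection"
begin


function rf :: "int \<Rightarrow> int set \<Rightarrow> nat \<Rightarrow> int" where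
  "rf t D n = (1 - (\<Sum>d\<in>D. if 0 < d \<and> d \<le> int n then rf t D (nat (int n - d)) else 0)) mod t"
  by auto
termination by (relation "Wellfounded.measure (\<lambda>(t,D,n). n)") auto

declare rf.simps[simp del]

lemma rf_range: "0 < t \<Longrightarrow> 0 \<le> rf t D n \<and> rf t D n < t"
  proof -
  assume t: "0 < t"
  have e: "rf t D n = (1 - (\<Sum>d\<in>D. if 0 < d \<and> d \<le> int n then rf t D (nat (int n - d)) else 0)) mod t"
    by (rule rf.simps)
  show ?thesis unfolding e using t by (intro conjI pos_mod_sign pos_mod_bound)
qed

lemma rf_rec:
  assumes "finite D" "\<forall>d\<in>D. 0 < d \<and> d \<le> int n"
  shows "(rf t D n + (\<Sum>d\<in>D. rf t D (nat (int n - d)))) mod t = 1 mod t"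
proof -
  have "rf t D n = (1 - (\<Sum>d\<in>D. rf t D (nat (int n - d)))) mod t"
    by (subst rf.simps) (simp add: assms(2))
  then show ?thesis by (simp add: mod_add_left_eq)
qed

lemma rf_period:
  assumes finD: "finite D" and bnd: "\<forall>d\<in>D. 0 < d \<and> d \<le> int W"
    and win: "\<forall>k<W. rf t D (i + k) = rf t D (j + k)"
  shows "rf t D (i + s) = rf t D (j + s)"
proof (induction s rule: less_induct)
  case (less s)
  show ?case
  proof (cases "s < W")
    case True then show ?thesis using win by auto
  next
    case False
    have "(\<Sum>d\<in>D. if 0 < d \<and> d \<le> int (i+s) then rf t D (nat (int (i+s) - d)) else 0)
        = (\<Sum>d\<in>D. if 0 < d \<and> d \<le> int (j+s) then rf t D (nat (int (j+s) - d)) else 0)"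
    proof (rule sum.cong[OF refl])
      fix d assume d: "d \<in> D"
      with bnd False have d0: "0 < d" "d \<le> int s" by auto
      have e1: "nat (int (i+s) - d) = i + (s - nat d)" and e2: "nat (int (j+s) - d) = j + (s - nat d)"
        using d0 by auto
      have "rf t D (i + (s - nat d)) = rf t D (j + (s - nat d))"
        using less[of "s - nat d"] d0 by auto
      then show "(if 0 < d \<and> d \<le> int (i+s) then rf t D (nat (int (i+s) - d)) else 0)
        = (if 0 < d \<and> d \<le> int (j+s) then rf t D (nat (int (j+s) - d)) else 0)"
        using d0 e1 e2 by auto
    qed
    then show ?thesis by (subst (1 2) rf.simps) simp
  qed
qed

lemma one_dim:
  fixes \<Phi> :: "int set" and t :: int
  assumes "finite \<Phi>" "\<Phi> \<noteq> {}" "0 < t"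
  shows "\<exists>g::int\<Rightarrow>int. (\<forall>n. 0 \<le> g n \<and> g n < t) \<and> (\<forall>n. (\<Sum>a\<in>\<Phi>. g (n - a)) mod t = 1 mod t)"
proof -
  define a0 where "a0 = Min \<Phi>"
  define \<Delta> where "\<Delta> = (\<lambda>a. a - a0) ` \<Phi>"
  define D where "D = \<Delta> - {0}"
  have finD: "finite D" using assms by (simp add: D_def \<Delta>_def)
  have D0: "\<forall>d\<in>D. 0 < d"
  proof
    fix d assume "d \<in> D"
    then obtain a where "a \<in> \<Phi>" "d = a - a0" "d \<noteq> 0" by (auto simp: D_def \<Delta>_def)
    moreover have "a0 \<le> a" using \<open>a \<in> \<Phi>\<close> assms by (simp add: a0_def)
    ultimately show "0 < d" by simp
  qed
  have zD: "0 \<in> \<Delta>" unfolding \<Delta>_def a0_def using assms by force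
  obtain W :: nat where W: "\<forall>d\<in>D. d \<le> int W"
  proof
    show "\<forall>d\<in>D. d \<le> int (nat (Max (insert 0 D)))" using finD by auto
  qed
  define w where "w n = map (\<lambda>k. rf t D (n + k)) [0..<W]" for n
  have "range w \<subseteq> {xs. set xs \<subseteq> {0..<t} \<and> length xs = W}"
    using rf_range[OF assms(3)] by (auto simp: w_def)
  then have "finite (range w)" using finite_lists_length_eq[of "{0..<t}" W] finite_subset by blast
  then have "\<not> inj w" using finite_imageD infinite_UNIV_nat by blast
  then obtain i j where ij: "i < j" "w i = w j" unfolding inj_def
    by (metis linorder_neqE_nat)
  have win: "\<forall>k<W. rf t D (i + k) = rf t D (j + k)"
  proof (intro allI impI)
    fix k assume "k < W"
    then show "rf t D (i + k) = rf t D (j + k)" using arg_cong[OF ij(2), of "\<lambda>xs. xs ! k"]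
      by (simp add: w_def)
  qed
  have per: "rf t D (i + s) = rf t D (j + s)" for s
    using rf_period[OF finD _ win] D0 W by auto
  define P where "P = j - i"
  have P0: "0 < P" using ij by (simp add: P_def)
  have per1: "rf t D (k + P) = rf t D k" if "i \<le> k" for k
  proof -
    have e1: "k + P = j + (k - i)" using that ij unfolding P_def by linarith
    have "rf t D (k + P) = rf t D (j + (k - i))" by (simp only: e1)
    also have "\<dots> = rf t D (i + (k - i))" using per[of "k - i"] by simp
    also have "i + (k - i) = k" using that by simp
    finally show ?thesis .
  qed
  have perq: "rf t D (k + q * P) = rf t D k" if "i \<le> k" for k q
  proof (induction q)
    case 0 then show ?case by simp
  next
    case (Suc q)
    have "rf t D (k + Suc q * P) = rf t D ((k + q * P) + P)" by (simp add: algebra_simps)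
    also have "\<dots> = rf t D (k + q * P)" using per1 that by simp
    finally show ?case using Suc by simp
  qed
  define g where "g m = rf t D (i + nat ((m - int i) mod int P))" for m
  have gval: "g m = rf t D n" if "i \<le> n" "int n mod int P = m mod int P" for m n
  proof -
    define s where "s = n - i"
    have s: "n = i + s" using that(1) by (simp add: s_def)
    have h1: "(int n - int i) mod int P = (m - int i) mod int P"
      by (rule mod_diff_cong[OF that(2) refl])
    have h2: "int n - int i = int s" using s by simp
    have h3: "int (s mod P) = int s mod int P" by (rule of_nat_mod[of s P])
    have "(m - int i) mod int P = int (s mod P)" using h1 h2 h3 by simp
    then have "nat ((m - int i) mod int P) = s mod P" by simp
    then have "g m = rf t D (i + s mod P)" by (simp add: g_def)
    also have "\<dots> = rf t D (i + s mod P + (s div P) * P)" using perq[of "i + s mod P" "s div P"] by simp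
    also have "i + s mod P + (s div P) * P = n" using s div_mult_mod_eq[of s P] by linarith
    finally show ?thesis .
  qed
  show ?thesis
  proof (intro exI conjI allI)
    fix n show "0 \<le> g n" "g n < t" using rf_range[OF assms(3)] by (auto simp: g_def)
  next
    fix n
    define m where "m = n - a0"
    define N where "N = i + W + nat ((m - int i - int W) mod int P)"
    have Nmod: "int N mod int P = m mod int P"
    proof -
      have "int N = int i + int W + (m - int i - int W) mod int P" using P0 by (simp add: N_def)
      then have "int N mod int P = (int i + int W + (m - int i - int W)) mod int P"
        by (metis mod_add_right_eq)
      then show ?thesis by simp
    qed
      
    have key: "g (m - d) = rf t D (nat (int N - d))" if "d \<in> \<Delta>" for d
    proof -
      have "d = 0 \<or> d \<in> D" using that by (auto simp: D_def)
      then have "0 \<le> d \<and> d \<le> int W" using D0 W by auto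
      then have dd: "0 \<le> d" "d \<le> int W" by auto
      have mp: "0 \<le> (m - int i - int W) mod int P" using P0 by simp
      have "int i \<le> int N - d" using dd mp by (simp add: N_def)
      then have i1: "i \<le> nat (int N - d)" by (metis nat_int nat_mono)
      have "int (nat (int N - d)) = int N - d" using dd by (simp add: N_def)
      then have "int (nat (int N - d)) mod int P = (m - d) mod int P"
        using Nmod by (metis mod_diff_left_eq)
      then show ?thesis using gval[OF i1] by simp
    qed
    have "(\<Sum>a\<in>\<Phi>. g (n - a)) = (\<Sum>d\<in>\<Delta>. g (m - d))"
      unfolding \<Delta>_def m_def by (subst sum.reindex) (auto simp: inj_on_def algebra_simps)
    also have "\<dots> = (\<Sum>d\<in>\<Delta>. rf t D (nat (int N - d)))" using key by simp
    also have "\<dots> = rf t D N + (\<Sum>d\<in>D. rf t D (nat (int N - d)))"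
      unfolding D_def using zD finD
      by (simp add: sum.remove[of \<Delta> 0] D_def)
    finally have eq: "(\<Sum>a\<in>\<Phi>. g (n - a)) = rf t D N + (\<Sum>d\<in>D. rf t D (nat (int N - d)))" .
    show "(\<Sum>a\<in>\<Phi>. g (n - a)) mod t = 1 mod t"
    proof -
      have "\<forall>d\<in>D. 0 < d \<and> d \<le> int N" using D0 W by (force simp: N_def)
      then show ?thesis using rf_rec[OF finD, of N t] eq by simp
    qed
  qed
qed



definition pickC :: "nat \<Rightarrow> (int \<Rightarrow> nat) \<Rightarrow> int set \<Rightarrow> nat set list \<Rightarrow> nat \<Rightarrow> nat set" where
  "pickC K gn E hs k = (SOME C. C \<subseteq> {..<K} \<and> card C = gn (int_decode k) \<and>
      (\<forall>j<k. int_decode j - int_decode k \<in> E \<longrightarrow> C \<inter> hs ! j = {}))"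

primrec HL :: "nat \<Rightarrow> (int \<Rightarrow> nat) \<Rightarrow> int set \<Rightarrow> nat \<Rightarrow> nat set list" where
  "HL K gn E 0 = []"
| "HL K gn E (Suc k) = HL K gn E k @ [pickC K gn E (HL K gn E k) k]"

lemma HL_length: "length (HL K gn E k) = k"
  by (induction k) auto

lemma HL_nth: "j < k \<Longrightarrow> HL K gn E k ! j = pickC K gn E (HL K gn E j) j"
proof (induction k)
  case 0 then show ?case by simp
next
  case (Suc k)
  show ?case
  proof (cases "j < k")
    case True then show ?thesis using Suc by (simp add: nth_append HL_length)
  next
    case False then have "j = k" using Suc by simp
    then show ?thesis by (simp add: nth_append HL_length)
  qed
qed

lemma greedy_col:
  fixes E :: "int set" and gn :: "int \<Rightarrow> nat" and c K :: nat
  assumes finE: "finite E" and gc: "\<forall>n. gn n \<le> c" and cK: "c * (card E + 1) \<le> K"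
    and E0: "0 \<notin> E" and Esym: "\<forall>e\<in>E. - e \<in> E"
  shows "\<exists>h::int \<Rightarrow> nat set. (\<forall>n. h n \<subseteq> {..<K} \<and> card (h n) = gn n) \<and>
           (\<forall>n n'. n' - n \<in> E \<longrightarrow> h n \<inter> h n' = {})"
proof -
  define H where "H k = pickC K gn E (HL K gn E k) k" for k
  have Q: "H k \<subseteq> {..<K} \<and> card (H k) = gn (int_decode k) \<and>
      (\<forall>j<k. int_decode j - int_decode k \<in> E \<longrightarrow> H k \<inter> H j = {})" for k
  proof (induction k rule: less_induct)
    case (less k)
    define J where "J = {j. j < k \<and> int_decode j - int_decode k \<in> E}"
    define U where "U = (\<Union>j\<in>J. H j)"
    have finJ: "finite J" by (simp add: J_def)
    have "inj_on (\<lambda>j. int_decode j - int_decode k) J"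
      by (auto simp: inj_on_def int_decode_eq)
    then have cJ: "card J \<le> card E"
      by (rule card_inj_on_le) (auto simp: J_def finE)
    have "card U \<le> (\<Sum>j\<in>J. card (H j))" unfolding U_def by (rule card_UN_le[OF finJ])
    also have "\<dots> \<le> (\<Sum>j\<in>J. c)"
      by (rule sum_mono) (use less gc J_def in auto)
    also have "\<dots> = card J * c" by simp
    also have "\<dots> \<le> card E * c" using cJ by simp
    finally have cU: "card U \<le> card E * c" .
    have "card {..<K} - card U \<le> card ({..<K} - U)" proof (rule diff_card_le_card_Diff)
      have "U \<subseteq> {..<K}" using less by (auto simp: U_def J_def)
      then show "finite U" using finite_subset by blast
    qed
    then have "gn (int_decode k) \<le> card ({..<K} - U)"
      using cU cK gc[rule_format, of "int_decode k"] by (simp add: algebra_simps)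
    then obtain C where C: "C \<subseteq> {..<K} - U" "card C = gn (int_decode k)"
      by (metis obtain_subset_with_card_n)
    have ex: "\<exists>C. C \<subseteq> {..<K} \<and> card C = gn (int_decode k) \<and>
      (\<forall>j<k. int_decode j - int_decode k \<in> E \<longrightarrow> C \<inter> HL K gn E k ! j = {})"
    proof (intro exI conjI allI impI)
      show "C \<subseteq> {..<K}" "card C = gn (int_decode k)" using C by auto
    next
      fix j assume j: "j < k" "int_decode j - int_decode k \<in> E"
      then have "j \<in> J" by (simp add: J_def)
      then have "H j \<subseteq> U" by (auto simp: U_def)
      moreover have "HL K gn E k ! j = H j" using j by (simp add: HL_nth H_def)
      ultimately show "C \<inter> HL K gn E k ! j = {}" using C by auto
    qed
    have "H k \<subseteq> {..<K} \<and> card (H k) = gn (int_decode k) \<and>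
      (\<forall>j<k. int_decode j - int_decode k \<in> E \<longrightarrow> H k \<inter> HL K gn E k ! j = {})"
      unfolding H_def pickC_def by (rule someI_ex[OF ex])
    moreover have "\<forall>j<k. HL K gn E k ! j = H j" by (simp add: HL_nth H_def)
    ultimately show ?case by auto
  qed
  define h where "h n = H (int_encode n)" for n
  show ?thesis
  proof (intro exI conjI allI impI)
    fix n show "h n \<subseteq> {..<K}" "card (h n) = gn n" using Q by (auto simp: h_def)
  next
    fix n n' assume e: "n' - n \<in> E"
    then have "n \<noteq> n'" using E0 by auto
    then have ne: "int_encode n \<noteq> int_encode n'" by (simp add: int_encode_eq)
    show "h n \<inter> h n' = {}"
    proof (cases "int_encode n' < int_encode n")
      case True then show ?thesis using Q[of "int_encode n"] e by (auto simp: h_def)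
    next
      case False
      then have lt: "int_encode n < int_encode n'" using ne by simp
      have "n - n' \<in> E" using Esym e by force
      then show ?thesis using Q[of "int_encode n'"] lt by (auto simp: h_def)
    qed
  qed
qed



definition dotw :: "('b \<Rightarrow> int) \<Rightarrow> int ^ 'b \<Rightarrow> int" where
  "dotw w x = (\<Sum>i\<in>UNIV. w i * x $ i)"

lemma dotw_diff: "dotw w (x - y) = dotw w x - dotw w y"
  by (simp add: dotw_def sum_subtractf algebra_simps)

lemma dotw_lin: "dotw (\<lambda>j. k * w j + (if j = i0 then 1 else 0)) x = k * dotw w x + x $ i0"
proof -
  have "dotw (\<lambda>j. k * w j + (if j = i0 then 1 else 0)) x
      = (\<Sum>j\<in>UNIV. k * (w j * x $ j)) + (\<Sum>j\<in>UNIV. (if j = i0 then x $ j else 0))"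
    unfolding dotw_def by (subst sum.distrib[symmetric]) (rule sum.cong, auto simp: algebra_simps)
  also have "\<dots> = k * dotw w x + x $ i0" by (simp add: dotw_def sum_distrib_left)
  finally show ?thesis .
qed

lemma sep:
  fixes Ds :: "(int ^ 'b) set"
  assumes "finite Ds" "0 \<notin> Ds"
  shows "\<exists>w. \<forall>d\<in>Ds. dotw w d \<noteq> 0"
  using assms
proof (induction Ds rule: finite_induct)
  case empty then show ?case by simp
next
  case (insert d Ds)
  obtain w where w: "\<forall>d'\<in>Ds. dotw w d' \<noteq> 0" using insert by auto
  show ?case
  proof (cases "dotw w d = 0")
    case False then show ?thesis using w by (intro exI[of _ w]) auto
  next
    case True
    have "d \<noteq> 0" using insert by auto
    then obtain i0 where i0: "d $ i0 \<noteq> 0" by (metis vec_eq_iff zero_index)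
    define k where "k = 1 + (\<Sum>d'\<in>Ds. \<bar>d' $ i0\<bar>)"
    have k1: "1 \<le> k" unfolding k_def by (simp add: sum_nonneg)
    define w' where "w' = (\<lambda>j. k * w j + (if j = i0 then 1 else 0))"
    have dw: "dotw w' x = k * dotw w x + x $ i0" for x unfolding w'_def by (rule dotw_lin)
    show ?thesis
    proof (intro exI[of _ w'] ballI)
      fix d' assume "d' \<in> insert d Ds"
      then consider "d' = d" | "d' \<in> Ds" by auto
      then show "dotw w' d' \<noteq> 0"
      proof cases
        case 1 then show ?thesis using True i0 dw by simp
      next
        case 2
        have "\<bar>d' $ i0\<bar> \<le> (\<Sum>d'\<in>Ds. \<bar>d' $ i0\<bar>)"
          using 2 insert(1) by (intro member_le_sum) auto
        then have le: "\<bar>d' $ i0\<bar> < k" by (simp add: k_def)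
        have nz: "dotw w d' \<noteq> 0" using w 2 by auto
        then have "1 \<le> \<bar>dotw w d'\<bar>" by linarith
        then have "k \<le> \<bar>k * dotw w d'\<bar>" using k1 by (simp add: abs_mult mult_le_cancel_left1)
        then show ?thesis using le dw by auto
      qed
    qed
  qed
qed



theorem lemma13:
  fixes t :: nat and T :: "(int ^ 'b) set" and S :: "'a set" and F :: "'a set set"
  assumes "t \<ge> 1"
    and "finite T" and "T \<noteq> {}"
    and "\<forall>A\<in>F. A \<subseteq> S"
    and "disjoint F"
    and "infinite F \<or> (t - 1) * (card T)^2 \<le> card F"
  shows "\<exists>X :: ((int ^ 'b) \<times> 'a) set. X \<subseteq> UNIV \<times> S \<and>
    (\<exists>P. P \<subseteq> UNIV \<times> F \<and>
         disjoint_family_on (\<lambda>(x, A). ((\<lambda>v. v + x) ` T) \<times> A) P \<and>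
         X = (\<Union>(x, A)\<in>P. ((\<lambda>v. v + x) ` T) \<times> A)) \<and>
    (\<forall>x. \<exists>m::nat. [m = 1] (mod t) \<and>
         (\<exists>G. G \<subseteq> F \<and> finite G \<and> card G = m \<and> {y\<in>S. (x, y) \<in> X} = \<Union>G))"
proof -
  note t1 = assms(1) and finT = assms(2) and Tne = assms(3) and FS = assms(4)
    and disF = assms(5) and cardF = assms(6)
  define Ds where "Ds = (\<lambda>(u, v). u - v) ` {(u, v). u \<in> T \<and> v \<in> T \<and> u \<noteq> v}"
  have "finite Ds" unfolding Ds_def
    by (rule finite_imageI, rule finite_subset[of _ "T \<times> T"]) (use finT in auto)
  moreover have "0 \<notin> Ds" by (auto simp: Ds_def)
  ultimately obtain w where w: "\<forall>d\<in>Ds. dotw w d \<noteq> 0" using sep by blast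
  define \<phi> where "\<phi> = dotw w"
  have phid: "\<phi> (x - y) = \<phi> x - \<phi> y" for x y by (simp add: \<phi>_def dotw_diff)
  have phine: "\<phi> u \<noteq> \<phi> v" if "u \<in> T" "v \<in> T" "u \<noteq> v" for u v
  proof -
    have "u - v \<in> Ds" using that by (auto simp: Ds_def)
    then have "\<phi> (u - v) \<noteq> 0" using w by (simp add: \<phi>_def)
    then show ?thesis by (simp add: phid)
  qed
  have injphi: "inj_on \<phi> T" using phine by (auto simp: inj_on_def)
  define \<Phi> where "\<Phi> = \<phi> ` T"
  obtain g where g: "\<forall>n. 0 \<le> g n \<and> g n < int t" "\<forall>n. (\<Sum>a\<in>\<Phi>. g (n - a)) mod int t = 1 mod int t"
    using one_dim[of \<Phi> "int t"] finT Tne t1 by (auto simp: \<Phi>_def)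
  define gn where "gn n = nat (g n)" for n
  have gnc: "\<forall>n. gn n \<le> t - 1"
  proof
    fix n
    have "g n < int t" "0 \<le> g n" using g(1) by auto
    then have "nat (g n) < t" by (simp add: nat_less_iff)
    then show "gn n \<le> t - 1" unfolding gn_def by linarith
  qed
  define E where "E = (\<lambda>(u, v). \<phi> u - \<phi> v) ` {(u, v). u \<in> T \<and> v \<in> T \<and> u \<noteq> v}"
  have finE: "finite E" unfolding E_def
    by (rule finite_imageI, rule finite_subset[of _ "T \<times> T"]) (use finT in auto)
  have E0: "0 \<notin> E" using phine by (auto simp: E_def)
  have Esym: "\<forall>e\<in>E. - e \<in> E" by (force simp: E_def)
  have Emem: "\<phi> u - \<phi> v \<in> E" if "u \<in> T" "v \<in> T" "u \<noteq> v" for u v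
    using that by (force simp: E_def)
  have "insert 0 E \<subseteq> (\<lambda>(u, v). \<phi> u - \<phi> v) ` (T \<times> T)"
    using Tne by (force simp: E_def)
  then have "card (insert 0 E) \<le> card (T \<times> T)"
    by (meson card_image_le card_mono finT finite_SigmaI finite_imageI order_trans)
  then have cE: "card E + 1 \<le> (card T)^2" using finE E0 by (simp add: card_cartesian_product power2_eq_square)
  define K where "K = (t - 1) * (card T)^2"
  have cK: "(t - 1) * (card E + 1) \<le> K" unfolding K_def using cE by (rule mult_le_mono2)
  obtain h where h: "\<forall>n. h n \<subseteq> {..<K} \<and> card (h n) = gn n"
    "\<forall>n n'. n' - n \<in> E \<longrightarrow> h n \<inter> h n' = {}"
    using greedy_col[OF finE gnc cK E0 Esym] by blast
  obtain F0 where F0: "F0 \<subseteq> F" "finite F0" "card F0 = K"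
  proof -
    show ?thesis
    proof (cases "finite F")
      case False then show ?thesis using infinite_arbitrarily_large[OF False, of K] that by blast
    next
      case True then have "K \<le> card F" using cardF by (simp add: K_def)
      then show ?thesis using that by (metis obtain_subset_with_card_n)
    qed
  qed
  obtain col where col: "bij_betw col {0..<K} F0" using ex_bij_betw_nat_finite[OF F0(2)] F0(3) by auto
  have colF: "col i \<in> F" if "i < K" for i using col that F0(1) by (auto simp: bij_betw_def)
  have colinj: "col i = col j \<Longrightarrow> i < K \<Longrightarrow> j < K \<Longrightarrow> i = j" for i j
    using col by (auto simp: bij_betw_def inj_on_def)
  have hK: "i \<in> h n \<Longrightarrow> i < K" for i n using h(1) by auto
  define P where "P = {(x, col i) | x i. i \<in> h (\<phi> x)}"
  define X where "X = (\<Union>(x, A)\<in>P. ((\<lambda>v. v + x) ` T) \<times> A)"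
  have A1: "X \<subseteq> UNIV \<times> S"
  proof
    fix z assume "z \<in> X"
    then obtain x i where xi: "i \<in> h (\<phi> x)" "z \<in> ((\<lambda>v. v + x) ` T) \<times> col i"
      unfolding X_def P_def by blast
    then have "col i \<subseteq> S" using FS colF hK by blast
    then show "z \<in> UNIV \<times> S" using xi by auto
  qed
  have A2: "P \<subseteq> UNIV \<times> F" using colF hK by (auto simp: P_def)
  have A3: "disjoint_family_on (\<lambda>(x, A). ((\<lambda>v. v + x) ` T) \<times> A) P"
      unfolding disjoint_family_on_def
    proof (intro ballI impI)
      fix p q assume p: "p \<in> P" and q: "q \<in> P" and pq: "p \<noteq> q"
      obtain x i where xi: "p = (x, col i)" "i \<in> h (\<phi> x)" using p by (auto simp: P_def)
      obtain y j where yj: "q = (y, col j)" "j \<in> h (\<phi> y)" using q by (auto simp: P_def)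
      show "(case p of (x, A) \<Rightarrow> (\<lambda>v. v + x) ` T \<times> A) \<inter> (case q of (x, A) \<Rightarrow> (\<lambda>v. v + x) ` T \<times> A) = {}"
      proof (rule ccontr)
        assume "\<not> ?thesis"
        then obtain u v z where uv: "u \<in> T" "v \<in> T" "u + x = v + y" "z \<in> col i" "z \<in> col j"
          using xi yj by auto
        have "col i = col j"
        proof (rule ccontr)
          assume "col i \<noteq> col j"
          then have "disjnt (col i) (col j)" using disF colF hK xi yj by (metis pairwise_def)
          then show False using uv by (auto simp: disjnt_def)
        qed
        then have ij: "i = j" using colinj hK xi yj by blast
        then have "x \<noteq> y" using pq xi yj by auto
        then have "u \<noteq> v" using uv by auto
        have "y - x = u - v" using uv(3) by (simp add: algebra_simps)
        then have "\<phi> y - \<phi> x = \<phi> u - \<phi> v" by (metis phid)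
        then have "\<phi> y - \<phi> x \<in> E" using Emem uv \<open>u \<noteq> v\<close> by simp
        then have "h (\<phi> x) \<inter> h (\<phi> y) = {}" using h(2) by blast
        then show False using xi yj ij by auto
      qed
    qed
  have A4: "\<exists>m::nat. [m = 1] (mod t) \<and>
         (\<exists>G. G \<subseteq> F \<and> finite G \<and> card G = m \<and> {y\<in>S. (p, y) \<in> X} = \<Union>G)" for p
  proof -
    define I where "I = (\<Union>v\<in>T. h (\<phi> p - \<phi> v))"
    define m where "m = card I"
    have IK: "I \<subseteq> {..<K}" using h(1) by (auto simp: I_def)
    have cardI: "card I = (\<Sum>v\<in>T. gn (\<phi> p - \<phi> v))"
    proof -
      have "card I = (\<Sum>v\<in>T. card (h (\<phi> p - \<phi> v)))" unfolding I_def
      proof (rule card_UN_disjoint[OF finT])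
        show "\<forall>i\<in>T. finite (h (\<phi> p - \<phi> i))" using h(1) by (meson finite_lessThan finite_subset)
        show "\<forall>i\<in>T. \<forall>j\<in>T. i \<noteq> j \<longrightarrow> h (\<phi> p - \<phi> i) \<inter> h (\<phi> p - \<phi> j) = {}"
        proof (intro ballI impI)
          fix a b assume "a \<in> T" "b \<in> T" "a \<noteq> b"
          then have "(\<phi> p - \<phi> b) - (\<phi> p - \<phi> a) \<in> E" using Emem by simp
          then show "h (\<phi> p - \<phi> a) \<inter> h (\<phi> p - \<phi> b) = {}" using h(2) by blast
        qed
      qed
      then show ?thesis using h(1) by simp
    qed
    have "int m = (\<Sum>v\<in>T. g (\<phi> p - \<phi> v))"
      using cardI g(1) by (simp add: m_def gn_def)
    also have "\<dots> = (\<Sum>a\<in>\<Phi>. g (\<phi> p - a))" unfolding \<Phi>_def by (simp add: sum.reindex[OF injphi])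
    finally have "int m mod int t = 1 mod int t" using g(2) by simp
    then have mc: "[m = 1] (mod t)" by (metis cong_def cong_int_iff of_nat_1)
    have "\<exists>G. G \<subseteq> F \<and> finite G \<and> card G = m \<and> {y \<in> S. (p, y) \<in> X} = \<Union> G"
    proof (intro exI conjI)
      show "col ` I \<subseteq> F" using IK colF by auto
      show "finite (col ` I)" using IK finite_subset by blast
      have "inj_on col I" using colinj IK by (auto simp: inj_on_def)
      then show "card (col ` I) = m" by (simp add: card_image m_def)
      show "{y \<in> S. (p, y) \<in> X} = \<Union> (col ` I)"
      proof (intro set_eqI iffI)
        fix y assume "y \<in> {y \<in> S. (p, y) \<in> X}"
        then obtain x i v where "i \<in> h (\<phi> x)" "v \<in> T" "p = v + x" "y \<in> col i"
          by (auto simp: X_def P_def)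
        moreover have "\<phi> x = \<phi> p - \<phi> v" using \<open>p = v + x\<close> phid[of p v] by simp
        ultimately show "y \<in> \<Union> (col ` I)" by (auto simp: I_def)
      next
        fix y assume "y \<in> \<Union> (col ` I)"
        then obtain i v where iv: "v \<in> T" "i \<in> h (\<phi> p - \<phi> v)" "y \<in> col i" by (auto simp: I_def)
        define x where "x = p - v"
        have "\<phi> x = \<phi> p - \<phi> v" by (simp add: x_def phid)
        then have "(x, col i) \<in> P" using iv by (auto simp: P_def)
        moreover have "p \<in> (\<lambda>v. v + x) ` T" by (rule image_eqI[of _ _ v]) (simp_all add: x_def iv(1))
        ultimately have "(p, y) \<in> X" unfolding X_def
          by (intro UN_I[of "(x, col i)"]) (use iv in auto)
        moreover have "i < K" using hK iv(2) by blast
        then have "col i \<subseteq> S" using FS colF by blast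
        then have "y \<in> S" using iv(3) by blast
        ultimately show "y \<in> {y \<in> S. (p, y) \<in> X}" by simp
      qed
    qed
    then show ?thesis by (intro exI[of _ m] conjI mc)
  qed
  show ?thesis
  proof (rule exI[of _ X], intro conjI)
    show "X \<subseteq> UNIV \<times> S" by (rule A1)
    show "\<exists>P. P \<subseteq> UNIV \<times> F \<and> disjoint_family_on (\<lambda>(x, A). (\<lambda>v. v + x) ` T \<times> A) P \<and>
        X = (\<Union>(x, A)\<in>P. (\<lambda>v. v + x) ` T \<times> A)"
      by (intro exI[of _ P] conjI A2 A3 X_def)
    show "\<forall>x. \<exists>m. [m = 1] (mod t) \<and> (\<exists>G\<subseteq>F. finite G \<and> card G = m \<and> {y \<in> S. (x, y) \<in> X} = \<Union> G)"
      by (intro allI) (rule A4)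
  qed
qed

end
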